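(* Let $n\geq2$. As $E$-modules, $\tilde{H}^\ast(BSO(2n))\cong\tilde{H}^\ast(BSO(2n-1))\oplus\tilde{H}^\ast(MSO_{2n})$, where $MSO_{2n}$ is the Thom space of the universal oriented $2n$-plane bundle over $BSO(2n)$.
   Context: Cohomology is with $\mathbb{Z}/2$ coefficients. $E=\mathbb{Z}/2\langle Q_0,Q_1\rangle$ is the exterior subalgebra of the mod 2 Steenrod algebra generated by the Milnor primitives $Q_0=Sq^1$ and $Q_1=Sq^3+Sq^2Sq^1$, acting on cohomology via Steenrod operations. $H^\ast(BSO(m))=\mathbb{Z}/2[\widehat{\omega_2},\dots,\widehat{\omega_m}]$ with $\widehat{\omega_i}$ the Stiefel–Whitney classes. *)

theory Defs
  imports Main "HOL-Library.Poly_Mapping" "HOL-Library.Z2"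
begin

text \<open>Polynomials over Z/2 in variables w_i (i a natural number); a monomial is a
  finitely supported exponent function nat to nat.\<close>

type_synonym mono = "nat \<Rightarrow>\<^sub>0 nat"
type_synonym zpoly = "mono \<Rightarrow>\<^sub>0 bit"

definition var :: "nat \<Rightarrow> zpoly" where
  "var i = Poly_Mapping.single (Poly_Mapping.single i 1) 1"

definition const :: "bit \<Rightarrow> zpoly" where
  "const c = Poly_Mapping.single 0 c"

definition mdeg :: "mono \<Rightarrow> nat" where
  "mdeg m = (\<Sum>i\<in>Poly_Mapping.keys m. i * Poly_Mapping.lookup m i)"

definition homog :: "nat \<Rightarrow> zpoly \<Rightarrow> bool" where
  "homog d p \<longleftrightarrow> (\<forall>m\<in>Poly_Mapping.keys p. mdeg m = d)"

definition hpart :: "nat \<Rightarrow> zpoly \<Rightarrow> zpoly" where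
  "hpart d p = (\<Sum>m\<in>{m\<in>Poly_Mapping.keys p. mdeg m = d}. Poly_Mapping.single m (Poly_Mapping.lookup p m))"

definition subst :: "(nat \<Rightarrow> zpoly) \<Rightarrow> zpoly \<Rightarrow> zpoly" where
  "subst f p = (\<Sum>m\<in>Poly_Mapping.keys p. const (Poly_Mapping.lookup p m) * (\<Prod>i\<in>Poly_Mapping.keys m. f i ^ Poly_Mapping.lookup m i))"

text \<open>H^*(BSO(N)) = Z/2[w_2,...,w_N]: polynomials in the variables 2..N\<close>
definition HBSO :: "nat \<Rightarrow> zpoly set" where
  "HBSO N = {p. \<forall>m\<in>Poly_Mapping.keys p. Poly_Mapping.keys m \<subseteq> {2..N}}"

text \<open>reduced cohomology: no constant term (positive degree part)\<close>
definition rHBSO :: "nat \<Rightarrow> zpoly set" where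
  "rHBSO N = {p \<in> HBSO N. 0 \<notin> Poly_Mapping.keys p}"

text \<open>Stiefel-Whitney class w_i of the universal bundle over BSO(N):
  w_0 = 1, w_1 = 0 (oriented), w_i = 0 for i > N\<close>
definition sw :: "nat \<Rightarrow> nat \<Rightarrow> zpoly" where
  "sw N i = (if i = 0 then 1 else if i = 1 \<or> N < i then 0 else var i)"

text \<open>Wu formula: Sq^k(w_m) = sum_{t=0}^k binom(m-k+t-1,t) w_{k-t} w_{m+t} (k \<le> m),
  and Sq^k(w_m) = 0 for k > m\<close>
definition SqW :: "nat \<Rightarrow> nat \<Rightarrow> nat \<Rightarrow> zpoly" where
  "SqW N k m = (if k \<le> m then
     (\<Sum>t\<le>k. of_nat ((m - k + t - 1) choose t) * sw N (k - t) * sw N (m + t)) else 0)"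

text \<open>total Steenrod square, a ring homomorphism by the Cartan formula\<close>
definition totSq :: "nat \<Rightarrow> zpoly \<Rightarrow> zpoly" where
  "totSq N = subst (\<lambda>m. \<Sum>k\<le>m. SqW N k m)"

definition Sq :: "nat \<Rightarrow> nat \<Rightarrow> zpoly \<Rightarrow> zpoly" where
  "Sq N k p = (\<Sum>d\<in>mdeg ` Poly_Mapping.keys p. hpart (d + k) (totSq N (hpart d p)))"

definition Q0 :: "nat \<Rightarrow> zpoly \<Rightarrow> zpoly" where
  "Q0 N p = Sq N 1 p"

definition Q1 :: "nat \<Rightarrow> zpoly \<Rightarrow> zpoly" where
  "Q1 N p = Sq N 3 p + Sq N 2 (Sq N 1 p)"

text \<open>Reduced cohomology of the Thom space MSO_N: the free H^*(BSO(N))-module on the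
  Thom class U (degree N); the element x represents x U (of degree deg x + N).
  Steenrod action: Sq^j U = w_j U and the Cartan formula,
  Sq^k(x U) = sum_{i+j=k} Sq^i(x) w_j U.\<close>
definition ThomSq :: "nat \<Rightarrow> nat \<Rightarrow> zpoly \<Rightarrow> zpoly" where
  "ThomSq N k x = (\<Sum>i\<le>k. Sq N i x * sw N (k - i))"

definition TQ0 :: "nat \<Rightarrow> zpoly \<Rightarrow> zpoly" where
  "TQ0 N x = ThomSq N 1 x"

definition TQ1 :: "nat \<Rightarrow> zpoly \<Rightarrow> zpoly" where
  "TQ1 N x = ThomSq N 3 x + ThomSq N 2 (ThomSq N 1 x)"

end

theory Submission
  imports Defs
begin

declare bit_not_zero_iff [simp del] bit_not_one_iff [simp del]

lemma bit_add_self [simp]: "(x::bit) + x = 0"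
  by (cases x) simp_all

lemma zpoly_add_self [simp]: "(p::zpoly) + p = 0"
  by (rule poly_mapping_eqI) (simp only: lookup_add bit_add_self lookup_zero)

lemma zpoly_two [simp]: "(2::zpoly) = 0"
  by (metis single_numeral bit_2_eq_0 single_zero)

lemma of_nat_zpoly: "(of_nat c :: zpoly) = (if even c then 0 else 1)"
proof (induction c)
  case 0
  then show ?case by simp
next
  case (Suc c)
  then show ?case by (auto simp: add.commute[of 1] one_add_one)
qed

lemma of_nat_zpoly_even [simp]: "even c \<Longrightarrow> (of_nat c :: zpoly) = 0"
  by (simp add: of_nat_zpoly)

lemma pm_sum: "(p::'a \<Rightarrow>\<^sub>0 'b::comm_monoid_add) = (\<Sum>m\<in>Poly_Mapping.keys p. Poly_Mapping.single m (Poly_Mapping.lookup p m))"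
proof (rule poly_mapping_eqI)
  fix k
  have "Poly_Mapping.lookup (\<Sum>m\<in>Poly_Mapping.keys p. Poly_Mapping.single m (Poly_Mapping.lookup p m)) k
      = (\<Sum>m\<in>Poly_Mapping.keys p. if m = k then Poly_Mapping.lookup p m else 0)"
    by (simp add: lookup_sum lookup_single when_def)
  also have "\<dots> = Poly_Mapping.lookup p k"
    by (simp add: in_keys_iff)
  finally show "Poly_Mapping.lookup p k = Poly_Mapping.lookup (\<Sum>m\<in>Poly_Mapping.keys p. Poly_Mapping.single m (Poly_Mapping.lookup p m)) k" by simp
qed

lemma pm_induct:
  fixes P :: "zpoly \<Rightarrow> bool"
  assumes "P 0" "\<And>m c. P (Poly_Mapping.single m c)" "\<And>p q. P p \<Longrightarrow> P q \<Longrightarrow> P (p + q)"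
  shows "P p"
proof -
  have "P (\<Sum>m\<in>S. Poly_Mapping.single m (Poly_Mapping.lookup p m))" if "finite S" for S
    using that by induct (auto simp: assms)
  then show ?thesis by (metis pm_sum finite_keys)
qed

lemma const_add: "const (a + b) = const a + const b"
  unfolding const_def by (rule single_add)

lemma const_mult: "const (a * b) = const a * const b"
  by (simp add: const_def mult_single)

lemma const_0 [simp]: "const 0 = 0" and const_1 [simp]: "const 1 = 1"
  by (simp_all add: const_def)

definition ev :: "(nat \<Rightarrow> zpoly) \<Rightarrow> mono \<Rightarrow> zpoly" where
  "ev f m = (\<Prod>i\<in>Poly_Mapping.keys m. f i ^ Poly_Mapping.lookup m i)"

lemma keys_add_nat: "Poly_Mapping.keys (a + b :: mono) = Poly_Mapping.keys a \<union> Poly_Mapping.keys b"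
  by (auto simp: in_keys_iff lookup_add)

lemma ev_superset: "finite S \<Longrightarrow> Poly_Mapping.keys m \<subseteq> S \<Longrightarrow> ev f m = (\<Prod>i\<in>S. f i ^ Poly_Mapping.lookup m i)"
  unfolding ev_def by (rule prod.mono_neutral_left) (auto simp: in_keys_iff)

lemma ev_add: "ev f (a + b) = ev f a * ev f b"
proof -
  let ?S = "Poly_Mapping.keys a \<union> Poly_Mapping.keys b"
  have "ev f (a + b) = (\<Prod>i\<in>?S. f i ^ Poly_Mapping.lookup (a+b) i)"
    by (rule ev_superset) (auto simp: keys_add_nat)
  also have "\<dots> = (\<Prod>i\<in>?S. f i ^ Poly_Mapping.lookup a i * f i ^ Poly_Mapping.lookup b i)"
    by (simp add: lookup_add power_add)
  also have "\<dots> = ev f a * ev f b"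
    by (simp add: prod.distrib ev_superset[of ?S])
  finally show ?thesis .
qed

lemma ev_zero [simp]: "ev f 0 = 1"
  by (simp add: ev_def)

lemma subst_eq: "subst f p = (\<Sum>m\<in>Poly_Mapping.keys p. const (Poly_Mapping.lookup p m) * ev f m)"
  by (simp add: subst_def ev_def)

lemma subst_single [simp]: "subst f (Poly_Mapping.single m c) = const c * ev f m"
  by (cases "c = 0") (simp_all add: subst_eq)

lemma subst_zero [simp]: "subst f 0 = 0"
  by (simp add: subst_eq)

lemma subst_add: "subst f (p + q) = subst f p + subst f q"
  unfolding subst_eq
  by (rule setsum_keys_plus_distrib) (simp_all only: const_add distrib_right const_0 mult_zero_left)

lemma subst_mult: "subst f (p * q) = subst f p * subst f q"
proof (induction p arbitrary: q rule: pm_induct)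
  case (2 m c)
  show ?case
  proof (induction q rule: pm_induct)
    case (2 m' c')
    then show ?case by (simp only: mult_single subst_single const_mult ev_add mult_ac)
  qed (simp_all add: distrib_left subst_add)
qed (simp_all add: distrib_right subst_add)

lemma subst_one [simp]: "subst f 1 = 1"
  by (metis single_one subst_single const_1 ev_zero mult_1)

lemma var_eq: "var i = Poly_Mapping.single (Poly_Mapping.single i 1) 1"
  by (simp add: var_def)

lemma subst_var [simp]: "subst f (var i) = f i"
  by (simp add: var_eq ev_def)

lemma subst_sum: "subst f (\<Sum>x\<in>A. g x) = (\<Sum>x\<in>A. subst f (g x))"
  by (induction A rule: infinite_finite_induct) (simp_all add: subst_add)

lemma subst_of_nat [simp]: "subst f (of_nat c) = of_nat c"
  by (metis single_of_nat subst_single const_def ev_zero mult_1_right)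

lemma mdeg_superset: "finite S \<Longrightarrow> Poly_Mapping.keys m \<subseteq> S \<Longrightarrow> mdeg m = (\<Sum>i\<in>S. i * Poly_Mapping.lookup m i)"
  unfolding mdeg_def by (rule sum.mono_neutral_left) (auto simp: in_keys_iff)

lemma mdeg_add: "mdeg (a + b) = mdeg a + mdeg b"
proof -
  let ?S = "Poly_Mapping.keys a \<union> Poly_Mapping.keys b"
  have "mdeg (a + b) = (\<Sum>i\<in>?S. i * Poly_Mapping.lookup (a+b) i)"
    by (rule mdeg_superset) (auto simp: keys_add_nat)
  also have "\<dots> = (\<Sum>i\<in>?S. i * Poly_Mapping.lookup a i + i * Poly_Mapping.lookup b i)"
    by (simp add: lookup_add algebra_simps)
  also have "\<dots> = mdeg a + mdeg b"
    by (simp add: sum.distrib mdeg_superset[of ?S])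
  finally show ?thesis .
qed

lemma mdeg_zero [simp]: "mdeg 0 = 0"
  by (simp add: mdeg_def)

lemma mdeg_single [simp]: "mdeg (Poly_Mapping.single i e) = i * e"
  by (cases "e = 0") (simp_all add: mdeg_def)

lemma lookup_hpart: "Poly_Mapping.lookup (hpart d p) m = (if mdeg m = d then Poly_Mapping.lookup p m else 0)"
proof -
  have "Poly_Mapping.lookup (hpart d p) m = (\<Sum>m'\<in>{m\<in>Poly_Mapping.keys p. mdeg m = d}. if m' = m then Poly_Mapping.lookup p m' else 0)"
    by (simp add: hpart_def lookup_sum lookup_single when_def)
  also have "\<dots> = (if m \<in> {m\<in>Poly_Mapping.keys p. mdeg m = d} then Poly_Mapping.lookup p m else 0)"
    by (rule sum.delta) simp
  also have "\<dots> = (if mdeg m = d then Poly_Mapping.lookup p m else 0)"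
    by (auto simp: in_keys_iff)
  finally show ?thesis .
qed

lemma hpart_add: "hpart d (p + q) = hpart d p + hpart d q"
  by (rule poly_mapping_eqI) (simp add: lookup_hpart lookup_add)

lemma hpart_zero [simp]: "hpart d 0 = 0"
  by (rule poly_mapping_eqI) (simp add: lookup_hpart)

lemma hpart_sum: "hpart d (\<Sum>x\<in>A. g x) = (\<Sum>x\<in>A. hpart d (g x))"
  by (induction A rule: infinite_finite_induct) (simp_all add: hpart_add)

lemma hpart_single: "hpart d (Poly_Mapping.single m c) = (if mdeg m = d then Poly_Mapping.single m c else 0)"
  by (rule poly_mapping_eqI) (auto simp add: lookup_hpart lookup_single when_def)

lemma keys_hpart: "Poly_Mapping.keys (hpart d p) = {m\<in>Poly_Mapping.keys p. mdeg m = d}"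
  by (auto simp: in_keys_iff lookup_hpart split: if_splits)

lemma homog_iff: "homog d p \<longleftrightarrow> hpart d p = p"
proof
  assume "homog d p"
  then show "hpart d p = p"
    by (intro poly_mapping_eqI) (auto simp: lookup_hpart homog_def in_keys_iff)
next
  assume "hpart d p = p"
  then show "homog d p"
    by (metis (mono_tags, lifting) homog_def keys_hpart mem_Collect_eq)
qed

lemma homog_hpart: "homog d (hpart d p)"
  by (simp add: homog_def keys_hpart)

lemma hpart_homog: "homog e p \<Longrightarrow> hpart d p = (if d = e then p else 0)"
proof (cases "d = e")
  case False
  assume h: "homog e p"
  have "hpart d p = 0"
  proof (rule poly_mapping_eqI)
    fix m
    show "Poly_Mapping.lookup (hpart d p) m = Poly_Mapping.lookup 0 m"
      using h False by (auto simp: lookup_hpart homog_def in_keys_iff)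
  qed
  then show ?thesis using False by simp
qed (simp add: homog_iff)

lemma homog_zero [simp]: "homog d 0"
  by (simp add: homog_def)

lemma homog_add: "homog d p \<Longrightarrow> homog d q \<Longrightarrow> homog d (p + q)"
  by (simp add: homog_iff hpart_add)

lemma homog_sum: "(\<And>x. x \<in> A \<Longrightarrow> homog d (g x)) \<Longrightarrow> homog d (\<Sum>x\<in>A. g x)"
  by (induction A rule: infinite_finite_induct) (simp_all add: homog_add)

lemma homog_mult: "homog a p \<Longrightarrow> homog b q \<Longrightarrow> homog (a + b) (p * q)"
  unfolding homog_def using keys_mult[of p q] by (auto simp: mdeg_add)

lemma homog_single: "mdeg m = d \<Longrightarrow> homog d (Poly_Mapping.single m c)"
  by (simp add: homog_def)

lemma homog_one [simp]: "homog 0 1"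
  by (simp add: homog_def)

lemma homog_var [simp]: "homog i (var i)"
  by (simp add: homog_def var_def)

lemma homog_of_nat [simp]: "homog 0 (of_nat c)"
  by (metis homog_single mdeg_zero single_of_nat)

lemma homog_power: "homog a p \<Longrightarrow> homog (a * e) (p ^ e)"
  by (induction e) (simp_all add: homog_mult)

lemma homog_prod: "(\<And>x. x \<in> A \<Longrightarrow> homog (g x) (h x)) \<Longrightarrow> homog (\<Sum>x\<in>A. g x) (\<Prod>x\<in>A. h x)"
  by (induction A rule: infinite_finite_induct) (simp_all add: homog_mult)

lemma pm_decomp: "finite D \<Longrightarrow> mdeg ` Poly_Mapping.keys p \<subseteq> D \<Longrightarrow> p = (\<Sum>d\<in>D. hpart d p)"
proof (rule poly_mapping_eqI)
  fix m assume "finite D" "mdeg ` Poly_Mapping.keys p \<subseteq> D"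
  then show "Poly_Mapping.lookup p m = Poly_Mapping.lookup (\<Sum>d\<in>D. hpart d p) m"
    by (auto simp: lookup_sum lookup_hpart in_keys_iff image_subset_iff)
qed

definition lowdeg :: "nat \<Rightarrow> zpoly \<Rightarrow> bool" where
  "lowdeg a p \<longleftrightarrow> (\<forall>m\<in>Poly_Mapping.keys p. a \<le> mdeg m)"

lemma lowdeg_hpart: "lowdeg a p \<Longrightarrow> d < a \<Longrightarrow> hpart d p = 0"
  by (rule poly_mapping_eqI) (auto simp: lookup_hpart lowdeg_def in_keys_iff not_le[symmetric])

lemma lowdeg_zero [simp]: "lowdeg a 0"
  by (simp add: lowdeg_def)

lemma lowdeg_add: "lowdeg a p \<Longrightarrow> lowdeg a q \<Longrightarrow> lowdeg a (p + q)"
  unfolding lowdeg_def using keys_add[of p q] by auto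

lemma lowdeg_sum: "(\<And>x. x \<in> A \<Longrightarrow> lowdeg d (g x)) \<Longrightarrow> lowdeg d (\<Sum>x\<in>A. g x)"
  by (induction A rule: infinite_finite_induct) (simp_all add: lowdeg_add)

lemma lowdeg_mult: "lowdeg a p \<Longrightarrow> lowdeg b q \<Longrightarrow> lowdeg (a + b) (p * q)"
  unfolding lowdeg_def using keys_mult[of p q] by (force simp: mdeg_add)

lemma lowdeg_one [simp]: "lowdeg 0 1"
  by (simp add: lowdeg_def)

lemma lowdeg_const [simp]: "lowdeg 0 (const c)"
  by (simp add: lowdeg_def)

lemma lowdeg_power: "lowdeg a p \<Longrightarrow> lowdeg (a * e) (p ^ e)"
  by (induction e) (simp_all add: lowdeg_mult)

lemma lowdeg_prod: "(\<And>x. x \<in> A \<Longrightarrow> lowdeg (g x) (h x)) \<Longrightarrow> lowdeg (\<Sum>x\<in>A. g x) (\<Prod>x\<in>A. h x)"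
  by (induction A rule: infinite_finite_induct) (simp_all add: lowdeg_mult)

lemma homog_lowdeg: "homog a p \<Longrightarrow> lowdeg a p"
  by (simp add: homog_def lowdeg_def)

lemma lowdeg_ev: "(\<And>i. lowdeg i (f i)) \<Longrightarrow> lowdeg (mdeg m) (ev f m)"
  unfolding ev_def mdeg_def by (rule lowdeg_prod) (simp add: lowdeg_power)

lemma subst_lowdeg: "(\<And>i. lowdeg i (f i)) \<Longrightarrow> homog a x \<Longrightarrow> lowdeg a (subst f x)"
  unfolding subst_eq
  by (rule lowdeg_sum) (metis add_0 homog_def lowdeg_const lowdeg_ev lowdeg_mult)

lemma hpart_mult: "hpart c (p * q) = (\<Sum>d\<le>c. hpart d p * hpart (c - d) q)"
proof (induction p arbitrary: q rule: pm_induct)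
  case (2 m a)
  show ?case
  proof (induction q rule: pm_induct)
    case (2 m' b)
    show ?case
    proof (cases "mdeg m + mdeg m' = c")
      case True
      then have "(\<Sum>d\<le>c. hpart d (Poly_Mapping.single m a) * hpart (c - d) (Poly_Mapping.single m' b))
         = (\<Sum>d\<le>c. if d = mdeg m then Poly_Mapping.single m a * Poly_Mapping.single m' b else 0)"
        by (intro sum.cong) (auto simp: hpart_single)
      also have "\<dots> = Poly_Mapping.single m a * Poly_Mapping.single m' b"
        using True by simp
      finally show ?thesis using True by (simp add: mult_single hpart_single mdeg_add)
    next
      case False
      then have "(\<Sum>d\<le>c. hpart d (Poly_Mapping.single m a) * hpart (c - d) (Poly_Mapping.single m' b)) = 0"
        by (intro sum.neutral) (auto simp: hpart_single)
      then show ?thesis using False by (simp add: mult_single hpart_single mdeg_add)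
    qed
  qed (simp_all add: distrib_left hpart_add sum.distrib)
qed (simp_all add: distrib_right hpart_add sum.distrib)

section \<open>Steenrod squares: general properties\<close>

lemma homog_cong: "homog a p \<Longrightarrow> a = b \<Longrightarrow> homog b p"
  by simp

lemma lowdeg_mono: "lowdeg a p \<Longrightarrow> b \<le> a \<Longrightarrow> lowdeg b p"
  by (auto simp: lowdeg_def)

lemma homog_sw: "homog j (sw N j)"
  by (simp add: sw_def)

lemma homog_SqW: "homog (m + k) (SqW N k m)"
proof (cases "k \<le> m")
  case True
  have "homog (m + k) (of_nat ((m - k + t - 1) choose t) * sw N (k - t) * sw N (m + t))" if "t \<le> k" for t
    using that by (intro homog_cong[OF homog_mult[OF homog_mult[OF homog_of_nat homog_sw] homog_sw]]) simp
  then show ?thesis using True unfolding SqW_def by (auto intro!: homog_sum)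
qed (simp add: SqW_def)

definition FF :: "nat \<Rightarrow> nat \<Rightarrow> zpoly" where
  "FF N m = (\<Sum>k\<le>m. SqW N k m)"

lemma totSq_FF: "totSq N = subst (FF N)"
  by (simp add: totSq_def FF_def[abs_def])

lemma lowdeg_FF: "lowdeg i (FF N i)"
  unfolding FF_def by (intro lowdeg_sum lowdeg_mono[OF homog_lowdeg[OF homog_SqW]]) simp

lemma SqW_gt: "m < k \<Longrightarrow> SqW N k m = 0"
  by (simp add: SqW_def)

lemma hpart_FF: "hpart (i + k) (FF N i) = SqW N k i"
proof -
  have "hpart (i + k) (FF N i) = (\<Sum>k'\<le>i. if k' = k then SqW N k' i else 0)"
    unfolding FF_def hpart_sum by (intro sum.cong refl) (simp add: hpart_homog[OF homog_SqW])
  also have "\<dots> = SqW N k i"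
    by (simp add: SqW_gt)
  finally show ?thesis .
qed

lemma totSq_add: "totSq N (p + q) = totSq N p + totSq N q"
  by (simp add: totSq_def subst_add)

lemma totSq_mult: "totSq N (p * q) = totSq N p * totSq N q"
  by (simp add: totSq_def subst_mult)

lemma totSq_lowdeg: "homog a x \<Longrightarrow> lowdeg a (totSq N x)"
  unfolding totSq_FF by (rule subst_lowdeg[OF lowdeg_FF])

lemma Sq_homog: "homog d p \<Longrightarrow> Sq N k p = hpart (d + k) (totSq N p)"
proof (cases "p = 0")
  case True
  then show ?thesis by (simp add: Sq_def totSq_def)
next
  case False
  assume h: "homog d p"
  have "mdeg ` Poly_Mapping.keys p \<subseteq> {d}" using h by (auto simp: homog_def)
  moreover have "Poly_Mapping.keys p \<noteq> {}" using False by simp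
  ultimately have "mdeg ` Poly_Mapping.keys p = {d}" by blast
  then show ?thesis using h by (simp add: Sq_def homog_iff)
qed

lemma Sq_zero [simp]: "Sq N k 0 = 0"
  by (simp add: Sq_def)

lemma Sq_superset:
  assumes "finite D" "mdeg ` Poly_Mapping.keys p \<subseteq> D"
  shows "Sq N k p = (\<Sum>d\<in>D. hpart (d + k) (totSq N (hpart d p)))"
  unfolding Sq_def
proof (rule sum.mono_neutral_left[OF assms])
  show "\<forall>i\<in>D - mdeg ` Poly_Mapping.keys p. hpart (i + k) (totSq N (hpart i p)) = 0"
  proof
    fix i assume "i \<in> D - mdeg ` Poly_Mapping.keys p"
    then have "hpart i p = 0"
      by (metis (mono_tags, lifting) DiffD2 empty_Collect_eq image_eqI keys_eq_empty keys_hpart)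
    then show "hpart (i + k) (totSq N (hpart i p)) = 0"
      by (simp add: totSq_def)
  qed
qed

lemma Sq_add: "Sq N k (p + q) = Sq N k p + Sq N k q"
proof -
  let ?D = "mdeg ` Poly_Mapping.keys p \<union> mdeg ` Poly_Mapping.keys q"
  have "mdeg ` Poly_Mapping.keys (p + q) \<subseteq> ?D"
    using keys_add[of p q] by auto
  then show ?thesis
    by (simp add: Sq_superset[of ?D] hpart_add totSq_add sum.distrib)
qed

lemma Sq_var: "Sq N k (var i) = SqW N k i"
  by (simp add: Sq_homog[OF homog_var] totSq_FF hpart_FF)

lemma Sq_one: "Sq N k 1 = (if k = 0 then 1 else 0)"
  by (simp add: Sq_homog[OF homog_one] totSq_def hpart_homog[OF homog_one])

lemma Sq_homog_deg: "homog d p \<Longrightarrow> homog (d + k) (Sq N k p)"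
  by (simp add: Sq_homog homog_hpart)

lemma Sq_of_nat_mult: "Sq N k (of_nat c * p) = of_nat c * Sq N k p"
  by (simp add: of_nat_zpoly)

lemma cartan:
  assumes hx: "homog a x" and hy: "homog b y"
  shows "Sq N k (x * y) = (\<Sum>i\<le>k. Sq N i x * Sq N (k - i) y)"
proof -
  let ?T = "totSq N x" and ?U = "totSq N y"
  have lT: "lowdeg a ?T" and lU: "lowdeg b ?U"
    using hx hy by (simp_all add: totSq_lowdeg)
  have "Sq N k (x * y) = hpart (a + b + k) (?T * ?U)"
    using Sq_homog[OF homog_mult[OF hx hy], of N k] by (simp add: totSq_mult)
  also have "\<dots> = (\<Sum>d\<le>a + b + k. hpart d ?T * hpart (a + b + k - d) ?U)"
    by (rule hpart_mult)
  also have "\<dots> = (\<Sum>d\<in>{a..a+k}. hpart d ?T * hpart (a + b + k - d) ?U)"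
  proof (rule sum.mono_neutral_right)
    show "\<forall>i\<in>{..a + b + k} - {a..a + k}. hpart i ?T * hpart (a + b + k - i) ?U = 0"
    proof
      fix i assume "i \<in> {..a + b + k} - {a..a + k}"
      then have "i < a \<or> a + b + k - i < b" by auto
      then show "hpart i ?T * hpart (a + b + k - i) ?U = 0"
        using lowdeg_hpart[OF lT] lowdeg_hpart[OF lU] by auto
    qed
  qed auto
  also have "\<dots> = (\<Sum>i\<le>k. hpart (a + i) ?T * hpart (b + (k - i)) ?U)"
  proof -
    have e: "{a..a+k} = (\<lambda>i. a + i) ` {..k}"
    proof (rule set_eqI)
      fix d
      show "d \<in> {a..a+k} \<longleftrightarrow> d \<in> (\<lambda>i. a + i) ` {..k}"
      proof
        assume "d \<in> {a..a+k}"
        then show "d \<in> (\<lambda>i. a + i) ` {..k}" by (intro image_eqI[of _ _ "d - a"]) auto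
      qed auto
    qed
    have "(\<Sum>d\<in>{a..a+k}. hpart d ?T * hpart (a + b + k - d) ?U)
        = (\<Sum>i\<in>{..k}. hpart (a + i) ?T * hpart (a + b + k - (a + i)) ?U)"
      unfolding e by (rule sum.reindex_cong[OF _ refl]) (auto simp: inj_on_def)
    also have "\<dots> = (\<Sum>i\<le>k. hpart (a + i) ?T * hpart (b + (k - i)) ?U)"
    proof (rule sum.cong[OF refl])
      fix i assume "i \<in> {..k}"
      then have "a + b + k - (a + i) = b + (k - i)" by auto
      then show "hpart (a + i) ?T * hpart (a + b + k - (a + i)) ?U = hpart (a + i) ?T * hpart (b + (k - i)) ?U"
        by simp
    qed
    finally show ?thesis .
  qed
  also have "\<dots> = (\<Sum>i\<le>k. Sq N i x * Sq N (k - i) y)"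
    using hx hy by (simp add: Sq_homog[OF hx] Sq_homog[OF hy])
  finally show ?thesis .
qed

lemma HBSO_iff: "p \<in> HBSO N \<longleftrightarrow> (\<forall>m\<in>Poly_Mapping.keys p. Poly_Mapping.keys m \<subseteq> {2..N})"
  by (simp add: HBSO_def)

lemma HBSO_zero [simp]: "0 \<in> HBSO N"
  by (simp add: HBSO_iff)

lemma HBSO_one [simp]: "1 \<in> HBSO N"
  by (simp add: HBSO_iff)

lemma HBSO_add: "p \<in> HBSO N \<Longrightarrow> q \<in> HBSO N \<Longrightarrow> p + q \<in> HBSO N"
  using keys_add[of p q] by (auto simp: HBSO_iff)

lemma HBSO_mult: "p \<in> HBSO N \<Longrightarrow> q \<in> HBSO N \<Longrightarrow> p * q \<in> HBSO N"
  using keys_mult[of p q] by (force simp: HBSO_iff keys_add_nat)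

lemma HBSO_single: "Poly_Mapping.keys m \<subseteq> {2..N} \<Longrightarrow> Poly_Mapping.single m c \<in> HBSO N"
  by (simp add: HBSO_iff)

lemma HBSO_var: "2 \<le> i \<Longrightarrow> i \<le> N \<Longrightarrow> var i \<in> HBSO N"
  by (simp add: var_def HBSO_iff)

lemma HBSO_of_nat [simp]: "of_nat c \<in> HBSO N"
  by (metis HBSO_single keys_zero empty_subsetI single_of_nat)

lemma HBSO_const [simp]: "const c \<in> HBSO N"
  by (simp add: const_def HBSO_single)

lemma HBSO_sw [simp]: "sw N' j \<in> HBSO N'"
  by (simp add: sw_def HBSO_var)

lemma HBSO_hpart: "p \<in> HBSO N \<Longrightarrow> hpart d p \<in> HBSO N"
  by (simp add: HBSO_iff keys_hpart)

lemma HBSO_sum: "(\<And>x. x \<in> A \<Longrightarrow> g x \<in> HBSO N) \<Longrightarrow> (\<Sum>x\<in>A. g x) \<in> HBSO N"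
  by (induction A rule: infinite_finite_induct) (simp_all add: HBSO_add)

lemma HBSO_prod: "(\<And>x. x \<in> A \<Longrightarrow> g x \<in> HBSO N) \<Longrightarrow> (\<Prod>x\<in>A. g x) \<in> HBSO N"
  by (induction A rule: infinite_finite_induct) (simp_all add: HBSO_mult)

lemma HBSO_power: "p \<in> HBSO N \<Longrightarrow> p ^ e \<in> HBSO N"
  by (induction e) (simp_all add: HBSO_mult)

lemma HBSO_subst:
  assumes "x \<in> HBSO N" "\<And>i. 2 \<le> i \<Longrightarrow> i \<le> N \<Longrightarrow> f i \<in> HBSO N"
  shows "subst f x \<in> HBSO N"
  unfolding subst_eq ev_def
proof (rule HBSO_sum)
  fix m assume m: "m \<in> Poly_Mapping.keys x"
  have "(\<Prod>i\<in>Poly_Mapping.keys m. f i ^ Poly_Mapping.lookup m i) \<in> HBSO N"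
  proof (rule HBSO_prod)
    fix i assume "i \<in> Poly_Mapping.keys m"
    moreover have "Poly_Mapping.keys m \<subseteq> {2..N}" using assms(1) m by (simp add: HBSO_iff)
    ultimately have "2 \<le> i" "i \<le> N" by auto
    then have "f i \<in> HBSO N" by (rule assms(2))
    then show "f i ^ Poly_Mapping.lookup m i \<in> HBSO N" by (rule HBSO_power)
  qed
  then show "const (Poly_Mapping.lookup x m) * (\<Prod>i\<in>Poly_Mapping.keys m. f i ^ Poly_Mapping.lookup m i) \<in> HBSO N"
    by (rule HBSO_mult[OF HBSO_const])
qed

lemma HBSO_SqW: "SqW N k m \<in> HBSO N"
  unfolding SqW_def
  by (cases "k \<le> m") (simp_all only: if_True if_False HBSO_zero,
      rule HBSO_sum, rule HBSO_mult[OF HBSO_mult[OF HBSO_of_nat HBSO_sw] HBSO_sw])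

lemma HBSO_Sq: "x \<in> HBSO N \<Longrightarrow> Sq N k x \<in> HBSO N"
  unfolding Sq_def totSq_FF FF_def
  by (rule HBSO_sum, rule HBSO_hpart, rule HBSO_subst[OF HBSO_hpart], assumption, rule HBSO_sum, rule HBSO_SqW)

lemma HBSO_mono: "N \<le> N' \<Longrightarrow> p \<in> HBSO N \<Longrightarrow> p \<in> HBSO N'"
  unfolding HBSO_iff
proof
  fix m assume "N \<le> N'" "\<forall>m\<in>Poly_Mapping.keys p. Poly_Mapping.keys m \<subseteq> {2..N}" "m \<in> Poly_Mapping.keys p"
  then have "Poly_Mapping.keys m \<subseteq> {2..N}" by blast
  moreover have "{2..N} \<subseteq> {2..N'}" using \<open>N \<le> N'\<close> by auto
  ultimately show "Poly_Mapping.keys m \<subseteq> {2..N'}" by blast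
qed

lemma var_power: "var i ^ e = Poly_Mapping.single (Poly_Mapping.single i e) 1"
  by (induction e) (simp_all add: var_eq mult_single single_add[symmetric] add.commute)

lemma prod_single: "(\<Prod>i\<in>A. Poly_Mapping.single (g i) (1::bit)) = Poly_Mapping.single (\<Sum>i\<in>A. g i) 1"
  by (induction A rule: infinite_finite_induct) (simp_all add: mult_single)

lemma single_as_prod: "Poly_Mapping.single m 1 = (\<Prod>i\<in>Poly_Mapping.keys m. var i ^ Poly_Mapping.lookup m i)"
  by (simp add: var_power prod_single pm_sum[of m, symmetric])

lemma mono_induct [consumes 1, case_names one var mult]:
  fixes P :: "zpoly \<Rightarrow> bool"
  assumes km: "Poly_Mapping.keys m \<subseteq> {2..N}"
    and one: "P 1" and var: "\<And>i. 2 \<le> i \<Longrightarrow> i \<le> N \<Longrightarrow> P (var i)"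
    and mult: "\<And>x y a b. homog a x \<Longrightarrow> homog b y \<Longrightarrow> x \<in> HBSO N \<Longrightarrow> y \<in> HBSO N \<Longrightarrow> P x \<Longrightarrow> P y \<Longrightarrow> P (x * y)"
  shows "P (Poly_Mapping.single m 1)"
proof -
  define R where "R x \<longleftrightarrow> P x \<and> x \<in> HBSO N \<and> (\<exists>a. homog a x)" for x
  have R1: "R 1" using one by (auto simp: R_def intro: homog_one)
  have Rmult: "R (x * y)" if "R x" "R y" for x y
    using that mult by (auto simp: R_def HBSO_mult intro: homog_mult)
  have Rpow: "R (var i ^ e)" if "2 \<le> i" "i \<le> N" for i e
  proof (induction e)
    case (Suc e)
    have "R (var i)" using var[OF that] HBSO_var[OF that] homog_var[of i] unfolding R_def by blast
    then show ?case using Rmult Suc by simp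
  qed (simp add: R1)
  have "R (\<Prod>i\<in>A. var i ^ Poly_Mapping.lookup m i)" if "A \<subseteq> {2..N}" for A
    using that by (induction A rule: infinite_finite_induct) (auto simp: R1 Rmult Rpow)
  then show ?thesis using km by (simp add: single_as_prod R_def)
qed

lemma HBSO_induct [consumes 1, case_names zero add mono]:
  fixes P :: "zpoly \<Rightarrow> bool"
  assumes x: "x \<in> HBSO N" and zero: "P 0" and add: "\<And>p q. P p \<Longrightarrow> P q \<Longrightarrow> P (p + q)"
    and mono: "\<And>m. Poly_Mapping.keys m \<subseteq> {2..N} \<Longrightarrow> P (Poly_Mapping.single m 1)"
  shows "P x"
proof -
  have "P (\<Sum>m\<in>A. Poly_Mapping.single m (Poly_Mapping.lookup x m))" if "A \<subseteq> Poly_Mapping.keys x" for A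
    using that
  proof (induction A rule: infinite_finite_induct)
    case (insert m F)
    then have "Poly_Mapping.lookup x m = 1" "Poly_Mapping.keys m \<subseteq> {2..N}"
      using x by (auto simp: in_keys_iff bit_not_zero_iff HBSO_iff)
    then show ?case using insert by (simp add: add mono)
  qed (simp_all add: zero)
  then show ?thesis by (metis pm_sum order_refl)
qed

declare of_nat_diff [simp del] One_nat_def [simp del]

lemma sw0 [simp]: "sw N 0 = 1" and sw1 [simp]: "sw N 1 = 0" and sw_Suc0 [simp]: "sw N (Suc 0) = 0"
  by (simp_all add: sw_def)

lemma sum_le1: "(\<Sum>i\<le>(1::nat). g i) = g 0 + g 1"
  by (simp add: atMost_Suc One_nat_def add_ac)

lemma sum_le2: "(\<Sum>i\<le>(2::nat). g i) = g 0 + g 1 + g 2"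
  by (simp add: atMost_Suc numeral_2_eq_2 One_nat_def add_ac)

lemma sum_le3: "(\<Sum>i\<le>(3::nat). g i) = g 0 + g 1 + g 2 + g 3"
  by (simp add: atMost_Suc numeral_3_eq_3 numeral_2_eq_2 One_nat_def add_ac)

lemma sw_var: "2 \<le> j \<Longrightarrow> j \<le> N \<Longrightarrow> sw N j = var j"
  by (simp add: sw_def)

lemma sw_gt: "N < j \<Longrightarrow> sw N j = 0"
  by (simp add: sw_def)

lemma SqW0: "SqW N 0 i = sw N i"
  by (simp add: SqW_def)

lemma SqW1: "2 \<le> i \<Longrightarrow> SqW N 1 i = of_nat (i - 1) * sw N (i + 1)"
  by (simp add: SqW_def sum_le1 One_nat_def)

lemma SqW2: "2 \<le> i \<Longrightarrow> SqW N 2 i = sw N 2 * sw N i + of_nat ((i - 1) choose 2) * sw N (i + 2)"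
  by (simp add: SqW_def sum_le2 One_nat_def)

lemma SqW3: "3 \<le> i \<Longrightarrow> SqW N 3 i = sw N 3 * sw N i + of_nat (i - 3) * sw N 2 * sw N (i + 1)
    + of_nat ((i - 1) choose 3) * sw N (i + 3)"
  by (simp add: SqW_def sum_le3 add_ac One_nat_def)

lemma SqW3_2: "SqW N 3 2 = 0"
  by (simp add: SqW_def)

lemma Sq0_id: "x \<in> HBSO N \<Longrightarrow> Sq N 0 x = x"
proof (induction x rule: HBSO_induct)
  case (mono m)
  then show ?case
  proof (induction rule: mono_induct)
    case one
    then show ?case by (simp add: Sq_one)
  next
    case (var i)
    then show ?case by (simp add: Sq_var SqW0 sw_var)
  next
    case (mult x y a b)
    then show ?case by (simp add: cartan[of _ _ _ _ N 0])
  qed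
qed (simp_all add: Sq_add)

lemma cartan1: "homog a x \<Longrightarrow> homog b y \<Longrightarrow> Sq N 1 (x * y) = Sq N 0 x * Sq N 1 y + Sq N 1 x * Sq N 0 y"
proof -
  have "(1::nat) - 0 = 1" "(1::nat) - 1 = 0" by simp_all
  then show "homog a x \<Longrightarrow> homog b y \<Longrightarrow> ?thesis" using cartan[of a x b y N 1] by (simp only: sum_le1 add_ac)
qed

lemma cartan2: "homog a x \<Longrightarrow> homog b y \<Longrightarrow> Sq N 2 (x * y) = Sq N 0 x * Sq N 2 y + Sq N 1 x * Sq N 1 y + Sq N 2 x * Sq N 0 y"
proof -
  have "(2::nat) - 0 = 2" "(2::nat) - 1 = 1" "(2::nat) - 2 = 0" by simp_all
  then show "homog a x \<Longrightarrow> homog b y \<Longrightarrow> ?thesis" using cartan[of a x b y N 2] by (simp only: sum_le2 add_ac)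
qed

lemma cartan3: "homog a x \<Longrightarrow> homog b y \<Longrightarrow> Sq N 3 (x * y) = Sq N 0 x * Sq N 3 y + Sq N 1 x * Sq N 2 y + Sq N 2 x * Sq N 1 y + Sq N 3 x * Sq N 0 y"
proof -
  have "(3::nat) - 0 = 3" "(3::nat) - 1 = 2" "(3::nat) - 2 = 1" "(3::nat) - 3 = 0" by simp_all
  then show "homog a x \<Longrightarrow> homog b y \<Longrightarrow> ?thesis" using cartan[of a x b y N 3] by (simp only: sum_le3 add_ac)
qed

lemma sq1_deriv: "homog a x \<Longrightarrow> homog b y \<Longrightarrow> x \<in> HBSO N \<Longrightarrow> y \<in> HBSO N \<Longrightarrow>
    Sq N 1 (x * y) = Sq N 1 x * y + x * Sq N 1 y"
  by (simp add: cartan1 Sq0_id)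

lemma Sq1_var: "2 \<le> i \<Longrightarrow> Sq N 1 (var i) = of_nat (i - 1) * sw N (i + 1)"
  by (simp add: Sq_var SqW1)

lemma Sq2_var: "2 \<le> i \<Longrightarrow> Sq N 2 (var i) = sw N 2 * sw N i + of_nat ((i - 1) choose 2) * sw N (i + 2)"
  by (simp add: Sq_var SqW2)

lemma Sq_sw: "2 \<le> j \<Longrightarrow> Sq N k (sw N j) = (if j \<le> N then Sq N k (var j) else 0)"
  by (simp add: sw_def)

lemma Sq1_sw: "2 \<le> j \<Longrightarrow> Sq N 1 (sw N j) = of_nat (j - 1) * sw N (j + 1)"
  by (simp add: Sq_sw Sq1_var sw_gt)

lemma Sq2_sw: "2 \<le> j \<Longrightarrow> Sq N 2 (sw N j) = sw N 2 * sw N j + of_nat ((j - 1) choose 2) * sw N (j + 2)"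
  by (simp add: Sq_sw Sq2_var sw_gt)

lemma of_nat_mult_consec: "(of_nat (i - 1) :: zpoly) * of_nat i = 0" if "1 \<le> i"
proof -
  have "even ((i - 1) * i)" using that by simp
  then show ?thesis by (simp flip: of_nat_mult)
qed

lemma Sq1Sq1: "x \<in> HBSO N \<Longrightarrow> Sq N 1 (Sq N 1 x) = 0"
proof (induction x rule: HBSO_induct)
  case (mono m)
  then show ?case
  proof (induction rule: mono_induct)
    case one
    then show ?case by (simp add: Sq_one)
  next
    case (var i)
    then have "Sq N 1 (Sq N 1 (var i)) = of_nat (i - 1) * Sq N 1 (sw N (i + 1))"
      by (simp add: Sq1_var Sq_of_nat_mult)
    also have "\<dots> = (of_nat (i - 1) * of_nat i) * sw N (i + 2)"
      using var Sq1_sw[of "i + 1" N] by (simp add: mult.assoc add.assoc)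
    finally have "Sq N 1 (Sq N 1 (var i)) = (of_nat (i - 1) * of_nat i) * sw N (i + 2)" .
    then show ?case using var by (simp add: of_nat_mult_consec)
  next
    case (mult x y a b)
    have h1: "homog (a + 1) (Sq N 1 x)" "homog (b + 1) (Sq N 1 y)"
      using mult by (simp_all add: Sq_homog_deg)
    have h2: "Sq N 1 x \<in> HBSO N" "Sq N 1 y \<in> HBSO N"
      using mult by (simp_all add: HBSO_Sq)
    show ?case
      using mult h1 h2
      by (simp add: sq1_deriv Sq_add)
  qed
qed (simp_all add: Sq_add)

lemma Q1_deriv:
  assumes hx: "homog a x" and hy: "homog b y" and x: "x \<in> HBSO N" and y: "y \<in> HBSO N"
  shows "Q1 N (x * y) = Q1 N x * y + x * Q1 N y"
proof -
  have h1: "homog (a + 1) (Sq N 1 x)" "homog (b + 1) (Sq N 1 y)"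
    using hx hy by (simp_all add: Sq_homog_deg)
  have h2: "Sq N 1 x \<in> HBSO N" "Sq N 1 y \<in> HBSO N"
    using x y by (simp_all add: HBSO_Sq)
  have e3: "Sq N 3 (x * y) = x * Sq N 3 y + Sq N 1 x * Sq N 2 y + Sq N 2 x * Sq N 1 y + Sq N 3 x * y"
    using cartan3[OF hx hy] x y by (simp add: Sq0_id)
  have e1: "Sq N 1 (x * y) = Sq N 1 x * y + x * Sq N 1 y"
    using sq1_deriv[OF hx hy x y] .
  have e2a: "Sq N 2 (Sq N 1 x * y) = Sq N 1 x * Sq N 2 y + Sq N 2 (Sq N 1 x) * y"
    using cartan2[OF h1(1) hy] h2 y x by (simp add: Sq0_id Sq1Sq1)
  have e2b: "Sq N 2 (x * Sq N 1 y) = x * Sq N 2 (Sq N 1 y) + Sq N 2 x * Sq N 1 y"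
    using cartan2[OF hx h1(2)] h2 y x by (simp add: Sq0_id Sq1Sq1)
  have "Q1 N (x * y) = (Q1 N x * y + x * Q1 N y)
      + ((Sq N 1 x * Sq N 2 y) + (Sq N 1 x * Sq N 2 y)) + ((Sq N 2 x * Sq N 1 y) + (Sq N 2 x * Sq N 1 y))"
    unfolding Q1_def e3 e1 Sq_add e2a e2b by (simp only: algebra_simps)
  then show ?thesis by (simp only: zpoly_add_self add_0_right)
qed

lemma Q0_deriv: "homog a x \<Longrightarrow> homog b y \<Longrightarrow> x \<in> HBSO N \<Longrightarrow> y \<in> HBSO N \<Longrightarrow>
    Q0 N (x * y) = Q0 N x * y + x * Q0 N y"
  by (simp add: Q0_def sq1_deriv)

lemma Q0_add: "Q0 N (x + y) = Q0 N x + Q0 N y"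
  by (simp add: Q0_def Sq_add)

lemma Q1_add: "Q1 N (x + y) = Q1 N x + Q1 N y"
  by (simp add: Q1_def Sq_add)

lemma Q0_var: "2 \<le> i \<Longrightarrow> Q0 N (var i) = of_nat (i - 1) * sw N (i + 1)"
  by (simp add: Q0_def Sq1_var)

lemma Q1_var: "2 \<le> i \<Longrightarrow> Q1 N (var i) =
   (if 3 \<le> i then sw N 3 * sw N i + of_nat (i - 3) * sw N 2 * sw N (i + 1)
    + of_nat ((i - 1) choose 3) * sw N (i + 3) else 0)
   + of_nat (i - 1) * (sw N 2 * sw N (i + 1) + of_nat (i choose 2) * sw N (i + 3))"
proof -
  have "Sq N 3 (var i) = (if 3 \<le> i then sw N 3 * sw N i + of_nat (i - 3) * sw N 2 * sw N (i + 1)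
    + of_nat ((i - 1) choose 3) * sw N (i + 3) else 0)" if "2 \<le> i"
  proof (cases "3 \<le> i")
    case False
    then have "i = 2" using that by simp
    then show ?thesis by (simp add: Sq_var SqW3_2)
  qed (simp add: Sq_var SqW3)
  moreover have "Sq N 2 (Sq N 1 (var i)) = of_nat (i - 1) * (sw N 2 * sw N (i + 1) + of_nat (i choose 2) * sw N (i + 3))"
    if "2 \<le> i"
  proof -
    have "Sq N 2 (Sq N 1 (var i)) = of_nat (i - 1) * Sq N 2 (sw N (i + 1))"
      using that by (simp add: Sq1_var Sq_of_nat_mult)
    also have "\<dots> = of_nat (i - 1) * (sw N 2 * sw N (i + 1) + of_nat (i choose 2) * sw N (i + 3))"
    proof -
      have "i + 1 + 2 = i + 3" "i + 1 - 1 = i" by simp_all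
      then show ?thesis using that Sq2_sw[of "i + 1" N] by (simp only:)
    qed
    finally show ?thesis .
  qed
  ultimately show "2 \<le> i \<Longrightarrow> ?thesis" by (simp add: Q1_def)
qed

section \<open>Comparison of BSO(2n) and BSO(2n-1)\<close>

lemma choose2_odd: "(2 * a + 1) choose 2 = a * (2 * a + 1)"
proof -
  have "(2 * a + 1) * (2 * a + 1 - 1) = 2 * (a * (2 * a + 1))" by simp
  then show ?thesis by (simp only: choose_two)
qed

lemma choose2_even: "(2 * a) choose 2 = a * (2 * a - 1)"
proof -
  have "(2 * a) * (2 * a - 1) = 2 * (a * (2 * a - 1))" by simp
  then show ?thesis by (simp only: choose_two)
qed

lemma even_choose3: "even ((2 * a) choose 3)"
proof (induction a)
  case 0
  then show ?case by (simp add: binomial_eq_0)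
next
  case (Suc a)
  have e: "2 * Suc a = Suc (Suc (2 * a))" by simp
  have c: "Suc (Suc m) choose 3 = (Suc m choose 2) + ((m choose 2) + (m choose 3))" for m
  proof -
    have "(3::nat) = Suc 2" by simp
    then show ?thesis by (simp only: binomial_Suc_Suc)
  qed
  have "(2 * Suc a) choose 3 = ((2 * a + 1) choose 2) + ((2 * a) choose 2) + ((2 * a) choose 3)"
    unfolding e c by (simp add: One_nat_def)
  also have "\<dots> = 2 * (2 * a * a) + ((2 * a) choose 3)"
  proof (cases a)
    case (Suc b)
    then show ?thesis unfolding choose2_odd choose2_even by (simp add: algebra_simps)
  qed simp
  finally show ?case using Suc by simp
qed

lemma swK: "1 \<le> K \<Longrightarrow> j \<noteq> K \<Longrightarrow> sw K j = sw (K - 1) j"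
  by (auto simp: sw_def)

lemma agree:
  assumes K: "K = 2 * n" and n: "2 \<le> n" and i: "2 \<le> i" "i \<le> K - 1"
  shows "Q0 K (var i) = Q0 (K - 1) (var i) \<and> Q1 K (var i) = Q1 (K - 1) (var i)"
proof -
  have K1: "1 \<le> K" using K n by simp
  have "2 \<noteq> K" "3 \<noteq> K" "i \<noteq> K" using K n i by presburger+
  then have s2: "sw K 2 = sw (K - 1) 2" and s3: "sw K 3 = sw (K - 1) 3" and si: "sw K i = sw (K - 1) i"
    using K1 by (simp_all add: swK)
  have q0: "Q0 K (var i) = Q0 (K - 1) (var i)"
  proof (cases "i + 1 = K")
    case True
    then have "even (i - 1)" using K by presburger
    then show ?thesis using i by (simp add: Q0_var)
  next
    case False
    then show ?thesis using i K1 by (simp add: Q0_var swK)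
  qed
  have q1: "Q1 K (var i) = Q1 (K - 1) (var i)"
  proof (cases "i + 1 = K")
    case True
    then have "even (i - 1)" "even (i - 3)" "3 \<le> i" "i + 3 \<noteq> K" using K n by presburger+
    then show ?thesis using i K1 by (simp add: Q1_var swK s2 s3 si)
  next
    case False
    note F1 = False
    show ?thesis
    proof (cases "i + 3 = K")
      case True
      then have "even (i - 1)" "i - 1 = 2 * (n - 2)" using K n by presburger+
      then have "even ((i - 1) choose 3)" by (simp add: even_choose3)
      then show ?thesis using i K1 F1 \<open>even (i - 1)\<close> by (simp add: Q1_var swK s2 s3 si)
    next
      case False
      then show ?thesis using i K1 F1 by (simp add: Q1_var swK s2 s3 si)
    qed
  qed
  show ?thesis using q0 q1 by simp
qed

lemma Q_restrict:
  assumes K: "K = 2 * n" and n: "2 \<le> n" and x: "x \<in> HBSO (K - 1)"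
  shows "Q0 K x = Q0 (K - 1) x \<and> Q1 K x = Q1 (K - 1) x"
  using x
proof (induction x rule: HBSO_induct)
  case zero
  then show ?case by (simp add: Q0_def Q1_def)
next
  case (add p q)
  then show ?case by (simp add: Q0_add Q1_add)
next
  case (mono m)
  then show ?case
  proof (induction rule: mono_induct)
    case one
    then show ?case by (simp add: Q0_def Q1_def Sq_one)
  next
    case (var i)
    then show ?case using agree[OF K n] by simp
  next
    case (mult x y a b)
    have "K - 1 \<le> K" by simp
    then have xy: "x \<in> HBSO K" "y \<in> HBSO K" using mult HBSO_mono by blast+
    show ?case
      using mult xy by (simp add: Q0_deriv[of a x b y] Q1_deriv[of a x b y])
  qed
qed

lemma Q0_varK: "2 \<le> K \<Longrightarrow> Q0 K (var K) = 0"
  by (simp add: Q0_var sw_gt)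

lemma Q1_varK: "4 \<le> K \<Longrightarrow> Q1 K (var K) = var 3 * var K"
  by (simp add: Q1_var sw_gt sw_var)

lemma thom:
  assumes K: "4 \<le> K" and x: "x \<in> HBSO K"
  shows "Q0 K (var K * x) = var K * Q0 K x \<and> Q1 K (var K * x) = var K * (var 3 * x + Q1 K x)"
  using x
proof (induction x rule: HBSO_induct)
  case zero
  then show ?case by (simp add: Q0_def Q1_def)
next
  case (add p q)
  then show ?case by (simp add: Q0_add Q1_add distrib_left)
next
  case (mono m)
  have h: "homog (mdeg m) (Poly_Mapping.single m 1)" by (simp add: homog_single)
  have w: "var K \<in> HBSO K" using K by (simp add: HBSO_var)
  have y: "Poly_Mapping.single m 1 \<in> HBSO K" using mono by (simp add: HBSO_single)
  show ?case
    using Q0_deriv[OF homog_var h w y] Q1_deriv[OF homog_var h w y] K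
    by (simp add: Q0_varK Q1_varK algebra_simps)
qed

lemma TQ0_eq: "TQ0 N x = Q0 N x"
  by (simp add: TQ0_def ThomSq_def sum_le1 Q0_def)

lemma TQ1_eq:
  assumes N: "3 \<le> N" and x: "x \<in> HBSO N"
  shows "TQ1 N x = var 3 * x + Q1 N x"
proof -
  have x1: "Sq N 1 x \<in> HBSO N" using x by (simp add: HBSO_Sq)
  have s2: "sw N 2 = var 2" and s3: "sw N 3 = var 3" using N by (simp_all add: sw_var)
  have "(1::nat) - 0 = 1" "(1::nat) - 1 = 0" "(2::nat) - 0 = 2" "(2::nat) - 1 = 1" "(2::nat) - 2 = 0"
    "(3::nat) - 0 = 3" "(3::nat) - 1 = 2" "(3::nat) - 2 = 1" "(3::nat) - 3 = 0" by simp_all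
  note ar = this
  have t1: "ThomSq N 1 x = Sq N 1 x"
    unfolding ThomSq_def sum_le1 ar by simp
  have t3: "ThomSq N 3 x = x * var 3 + Sq N 1 x * var 2 + Sq N 3 x"
    unfolding ThomSq_def sum_le3 ar using x by (simp add: Sq0_id s2 s3)
  have t2: "ThomSq N 2 (Sq N 1 x) = Sq N 1 x * var 2 + Sq N 2 (Sq N 1 x)"
    unfolding ThomSq_def sum_le2 ar using x1 by (simp add: Sq0_id s2)
  have "TQ1 N x = (var 3 * x + Q1 N x) + (Sq N 1 x * var 2 + Sq N 1 x * var 2)"
    unfolding TQ1_def t1 t2 t3 Q1_def by (simp only: algebra_simps)
  then show ?thesis by (simp only: zpoly_add_self add_0_right)
qed

section \<open>The splitting\<close>

lemma lookup_minus_nat: "Poly_Mapping.lookup (a - b :: mono) k = Poly_Mapping.lookup a k - Poly_Mapping.lookup b k"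
  by (simp add: minus_poly_mapping.rep_eq)

definition hi :: "nat \<Rightarrow> zpoly \<Rightarrow> zpoly" where
  "hi K p = Abs_poly_mapping (\<lambda>m. Poly_Mapping.lookup p (m + Poly_Mapping.single K 1))"

definition lo :: "nat \<Rightarrow> zpoly \<Rightarrow> zpoly" where
  "lo K p = p - var K * hi K p"

lemma lookup_hi: "Poly_Mapping.lookup (hi K p) m = Poly_Mapping.lookup p (m + Poly_Mapping.single K 1)"
proof -
  have "inj (\<lambda>m::mono. m + Poly_Mapping.single K 1)" by (auto simp: inj_on_def)
  then have "finite ((\<lambda>m. m + Poly_Mapping.single K 1) -` Poly_Mapping.keys p)"
    by (intro finite_vimageI) simp_all
  moreover have "{m. Poly_Mapping.lookup p (m + Poly_Mapping.single K 1) \<noteq> 0} = (\<lambda>m. m + Poly_Mapping.single K 1) -` Poly_Mapping.keys p"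
    by (auto simp: in_keys_iff)
  ultimately show ?thesis by (simp add: hi_def)
qed

lemma wmult_eq_iff: "(Poly_Mapping.single K 1 + m' = (m::mono)) \<longleftrightarrow> (0 < Poly_Mapping.lookup m K \<and> m' = m - Poly_Mapping.single K 1)"
proof
  assume "Poly_Mapping.single K 1 + m' = m"
  then show "0 < Poly_Mapping.lookup m K \<and> m' = m - Poly_Mapping.single K 1"
    by (auto simp: lookup_add)
next
  assume a: "0 < Poly_Mapping.lookup m K \<and> m' = m - Poly_Mapping.single K 1"
  show "Poly_Mapping.single K 1 + m' = m"
  proof (rule poly_mapping_eqI)
    fix k
    show "Poly_Mapping.lookup (Poly_Mapping.single K 1 + m') k = Poly_Mapping.lookup m k"
      using a by (cases "k = K") (auto simp: lookup_add lookup_minus_nat lookup_single)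
  qed
qed

lemma lookup_wmult: "Poly_Mapping.lookup (var K * q) m =
    (if 0 < Poly_Mapping.lookup m K then Poly_Mapping.lookup q (m - Poly_Mapping.single K 1) else 0)"
proof (induction q rule: pm_induct)
  case (2 m' c)
  show ?case
    unfolding var_eq mult_single lookup_single wmult_eq_iff by (cases c) (auto simp: when_def)
qed (simp_all add: distrib_left lookup_add)

lemma lookup_lo: "Poly_Mapping.lookup (lo K p) m = (if Poly_Mapping.lookup m K = 0 then Poly_Mapping.lookup p m else 0)"
proof (cases "Poly_Mapping.lookup m K = 0")
  case False
  then have "m - Poly_Mapping.single K 1 + Poly_Mapping.single K 1 = m"
    by (metis add.commute not_gr_zero wmult_eq_iff)
  then show ?thesis using False by (simp add: lo_def lookup_minus lookup_wmult lookup_hi)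
qed (cases "Poly_Mapping.lookup p m"; simp add: lo_def lookup_minus lookup_wmult)

lemma lo_add: "lo K (p + q) = lo K p + lo K q"
  by (rule poly_mapping_eqI) (simp add: lookup_lo lookup_add)

lemma hi_add: "hi K (p + q) = hi K p + hi K q"
  by (rule poly_mapping_eqI) (simp add: lookup_hi lookup_add)

lemma lo_hi_decomp: "lo K p + var K * hi K p = p"
  by (simp add: lo_def)

lemma hi_w: "hi K (var K * y) = y"
  by (rule poly_mapping_eqI) (simp add: lookup_hi lookup_wmult lookup_add)

lemma lo_w: "lo K (var K * y) = 0"
  by (simp add: lo_def hi_w)

lemma hi_low:
  assumes "1 \<le> K" "z \<in> HBSO (K - 1)"
  shows "hi K z = 0"
proof (rule poly_mapping_eqI)
  fix m :: mono
  have "K \<in> Poly_Mapping.keys (m + Poly_Mapping.single K 1)"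
    unfolding in_keys_iff lookup_add lookup_single_eq by linarith
  then have "m + Poly_Mapping.single K 1 \<notin> Poly_Mapping.keys z"
    using assms unfolding HBSO_iff by fastforce
  then show "Poly_Mapping.lookup (hi K z) m = Poly_Mapping.lookup 0 m"
    by (simp add: lookup_hi in_keys_iff)
qed

lemma lo_low: "1 \<le> K \<Longrightarrow> z \<in> HBSO (K - 1) \<Longrightarrow> lo K z = z"
  by (simp add: lo_def hi_low)

lemma keys_lo: "Poly_Mapping.keys (lo K p) = {m \<in> Poly_Mapping.keys p. Poly_Mapping.lookup m K = 0}"
  by (auto simp: in_keys_iff lookup_lo split: if_splits)

lemma keys_hi: "m \<in> Poly_Mapping.keys (hi K p) \<longleftrightarrow> m + Poly_Mapping.single K 1 \<in> Poly_Mapping.keys p"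
  by (simp add: in_keys_iff lookup_hi)

theorem lemma2:
  fixes n :: nat
  assumes "n \<ge> 2"
  shows "\<exists>f :: zpoly \<Rightarrow> zpoly \<times> zpoly.
    bij_betw f (rHBSO (2*n)) (rHBSO (2*n - 1) \<times> HBSO (2*n))
    \<and> (\<forall>x\<in>rHBSO (2*n). \<forall>y\<in>rHBSO (2*n).
          f (x + y) = (fst (f x) + fst (f y), snd (f x) + snd (f y)))
    \<and> (\<forall>x\<in>rHBSO (2*n).
          f (Q0 (2*n) x) = (Q0 (2*n - 1) (fst (f x)), TQ0 (2*n) (snd (f x))))
    \<and> (\<forall>x\<in>rHBSO (2*n).
          f (Q1 (2*n) x) = (Q1 (2*n - 1) (fst (f x)), TQ1 (2*n) (snd (f x))))
    \<and> (\<forall>d. \<forall>x\<in>rHBSO (2*n). homog d x \<longrightarrow>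
          homog d (fst (f x)) \<and> (snd (f x) = 0 \<or> (2*n \<le> d \<and> homog (d - 2*n) (snd (f x)))))"
proof -
  define K where "K = 2 * n"
  have K4: "4 \<le> K" and K1: "1 \<le> K" using assms by (simp_all add: K_def)
  define f where "f x = (lo K x, hi K x)" for x
  define g where "g y = fst y + var K * snd y" for y :: "zpoly \<times> zpoly"
  have lo_mem: "lo K x \<in> rHBSO (K - 1)" if x: "x \<in> rHBSO K" for x
  proof -
    have "Poly_Mapping.keys m \<subseteq> {2..K - 1}" if "m \<in> Poly_Mapping.keys (lo K x)" for m
    proof -
      have "m \<in> Poly_Mapping.keys x" "Poly_Mapping.lookup m K = 0"
        using that by (simp_all add: keys_lo)
      then have "Poly_Mapping.keys m \<subseteq> {2..K}" "K \<notin> Poly_Mapping.keys m"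
        using x by (auto simp: rHBSO_def HBSO_iff in_keys_iff)
      show ?thesis
      proof
        fix i assume "i \<in> Poly_Mapping.keys m"
        then have "2 \<le> i" "i \<le> K" "i \<noteq> K"
          using \<open>Poly_Mapping.keys m \<subseteq> {2..K}\<close> \<open>K \<notin> Poly_Mapping.keys m\<close> by auto
        then show "i \<in> {2..K - 1}" by simp
      qed
    qed
    moreover have "0 \<notin> Poly_Mapping.keys (lo K x)"
      using x by (simp add: keys_lo rHBSO_def)
    ultimately show ?thesis by (simp add: rHBSO_def HBSO_iff)
  qed
  have hi_mem: "hi K x \<in> HBSO K" if x: "x \<in> rHBSO K" for x
  proof -
    have "Poly_Mapping.keys m \<subseteq> {2..K}" if "m \<in> Poly_Mapping.keys (hi K x)" for m
    proof -
      have "m + Poly_Mapping.single K 1 \<in> Poly_Mapping.keys x" using that by (simp add: keys_hi)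
      then have "Poly_Mapping.keys (m + Poly_Mapping.single K 1) \<subseteq> {2..K}"
        using x by (simp add: rHBSO_def HBSO_iff)
      then show ?thesis by (simp add: keys_add_nat)
    qed
    then show ?thesis by (simp add: HBSO_iff)
  qed
  have bij: "bij_betw f (rHBSO K) (rHBSO (K - 1) \<times> HBSO K)"
  proof (rule bij_betw_byWitness[where f' = g])
    show "\<forall>a\<in>rHBSO K. g (f a) = a"
      by (simp add: f_def g_def lo_hi_decomp)
    show "\<forall>a'\<in>rHBSO (K - 1) \<times> HBSO K. f (g a') = a'"
    proof
      fix y assume y: "y \<in> rHBSO (K - 1) \<times> HBSO K"
      then have "fst y \<in> HBSO (K - 1)" by (auto simp: rHBSO_def)
      then show "f (g y) = y"
        using K1 by (simp add: f_def g_def lo_add hi_add lo_w hi_w lo_low hi_low)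
    qed
    show "f ` rHBSO K \<subseteq> rHBSO (K - 1) \<times> HBSO K"
      using lo_mem hi_mem by (auto simp: f_def)
    show "g ` (rHBSO (K - 1) \<times> HBSO K) \<subseteq> rHBSO K"
    proof
      fix z assume "z \<in> g ` (rHBSO (K - 1) \<times> HBSO K)"
      then obtain a b where ab: "a \<in> rHBSO (K - 1)" "b \<in> HBSO K" and z: "z = a + var K * b"
        by (auto simp: g_def)
      have "a \<in> HBSO K" using ab HBSO_mono[of "K - 1" K] by (auto simp: rHBSO_def)
      then have "z \<in> HBSO K" using ab K4 unfolding z
        by (intro HBSO_add HBSO_mult HBSO_var) simp_all
      moreover have "Poly_Mapping.lookup z 0 = 0"
        using ab by (simp add: z lookup_add lookup_wmult rHBSO_def in_keys_iff)
      ultimately show "z \<in> rHBSO K" by (simp add: rHBSO_def in_keys_iff)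
    qed
  qed
  have add: "\<forall>x\<in>rHBSO K. \<forall>y\<in>rHBSO K. f (x + y) = (fst (f x) + fst (f y), snd (f x) + snd (f y))"
    by (simp add: f_def lo_add hi_add)
  have q0: "\<forall>x\<in>rHBSO K. f (Q0 K x) = (Q0 (K - 1) (fst (f x)), TQ0 K (snd (f x)))"
  proof
    fix x assume x: "x \<in> rHBSO K"
    have l: "lo K x \<in> HBSO (K - 1)" and h: "hi K x \<in> HBSO K"
      using lo_mem[OF x] hi_mem[OF x] by (simp_all add: rHBSO_def)
    have "Q0 K x = Q0 K (lo K x + var K * hi K x)" by (simp only: lo_hi_decomp)
    also have "\<dots> = Q0 K (lo K x) + Q0 K (var K * hi K x)" by (rule Q0_add)
    also have "\<dots> = Q0 (K - 1) (lo K x) + var K * Q0 K (hi K x)"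
      using Q_restrict[OF K_def assms l] thom[OF K4 h] by simp
    finally have "Q0 K x = Q0 (K - 1) (lo K x) + var K * Q0 K (hi K x)" .
    moreover have "Q0 (K - 1) (lo K x) \<in> HBSO (K - 1)"
      using l by (simp add: Q0_def HBSO_Sq)
    ultimately show "f (Q0 K x) = (Q0 (K - 1) (fst (f x)), TQ0 K (snd (f x)))"
      using K1 by (simp add: f_def lo_add hi_add lo_w hi_w lo_low hi_low TQ0_eq)
  qed
  have q1: "\<forall>x\<in>rHBSO K. f (Q1 K x) = (Q1 (K - 1) (fst (f x)), TQ1 K (snd (f x)))"
  proof
    fix x assume x: "x \<in> rHBSO K"
    have l: "lo K x \<in> HBSO (K - 1)" and h: "hi K x \<in> HBSO K"
      using lo_mem[OF x] hi_mem[OF x] by (simp_all add: rHBSO_def)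
    have "Q1 K x = Q1 K (lo K x + var K * hi K x)" by (simp only: lo_hi_decomp)
    also have "\<dots> = Q1 K (lo K x) + Q1 K (var K * hi K x)" by (rule Q1_add)
    also have "\<dots> = Q1 (K - 1) (lo K x) + var K * (var 3 * hi K x + Q1 K (hi K x))"
      using Q_restrict[OF K_def assms l] thom[OF K4 h] by simp
    finally have "Q1 K x = Q1 (K - 1) (lo K x) + var K * (var 3 * hi K x + Q1 K (hi K x))" .
    moreover have "Q1 (K - 1) (lo K x) \<in> HBSO (K - 1)"
      using l by (simp add: Q1_def HBSO_Sq HBSO_add)
    moreover have "TQ1 K (hi K x) = var 3 * hi K x + Q1 K (hi K x)"
      using K4 h by (simp add: TQ1_eq)
    ultimately show "f (Q1 K x) = (Q1 (K - 1) (fst (f x)), TQ1 K (snd (f x)))"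
      using K1 by (simp add: f_def lo_add hi_add lo_w hi_w lo_low hi_low)
  qed
  have deg: "\<forall>d. \<forall>x\<in>rHBSO K. homog d x \<longrightarrow>
          homog d (fst (f x)) \<and> (snd (f x) = 0 \<or> (K \<le> d \<and> homog (d - K) (snd (f x))))"
  proof (intro allI ballI impI)
    fix d x assume x: "x \<in> rHBSO K" and hx: "homog d x"
    have "homog d (lo K x)" using hx by (simp add: homog_def keys_lo)
    moreover have "hi K x = 0 \<or> (K \<le> d \<and> homog (d - K) (hi K x))"
    proof (cases "hi K x = 0")
      case False
      have deg_m: "mdeg m + K = d" if "m \<in> Poly_Mapping.keys (hi K x)" for m
      proof -
        have "m + Poly_Mapping.single K 1 \<in> Poly_Mapping.keys x" using that by (simp add: keys_hi)
        then have "mdeg (m + Poly_Mapping.single K 1) = d" using hx by (simp add: homog_def)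
        then show ?thesis by (simp add: mdeg_add)
      qed
      obtain m where "m \<in> Poly_Mapping.keys (hi K x)" using False by fastforce
      then have "K \<le> d" using deg_m by fastforce
      moreover have "homog (d - K) (hi K x)" using deg_m by (force simp: homog_def)
      ultimately show ?thesis by simp
    qed simp
    ultimately show "homog d (fst (f x)) \<and> (snd (f x) = 0 \<or> (K \<le> d \<and> homog (d - K) (snd (f x))))"
      by (simp add: f_def)
  qed
  show ?thesis
    unfolding K_def[symmetric]
    by (rule exI[of _ f], intro conjI, fact bij, fact add, fact q0, fact q1, fact deg)
qed

end
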